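(* Let $G$ be a finite abelian group and $V\in{}^{G}_{G}\mathcal{YD}$ of finite Cartan type with each $q_{ii}$ of odd order and of order coprime to $3$ whenever $i$ lies in a component of type $G_2$, and with the basis $x_1,\dots,x_\theta$ ordered so that $(a_{ij})$ is block diagonal with each block the Cartan matrix of a connected Dynkin diagram. Let $N_i=\mathrm{ord}(q_{ii})$ and $S_{\mathrm{ord}}=TV/(\mathrm{ad}_{\mathrm{sk}}(x_i)(x_j):i<j)$, $s_{\mathrm{ord}}=TV/(\mathrm{ad}_{\mathrm{sk}}(x_i)(x_j)\ (i<j),\ x_i^{N_i}\ (\text{all }i))$. Then the projections $TV\to S_{\mathrm{ord}}$ and $TV\to s_{\mathrm{ord}}$ factor to give surjections $R^{\mathrm{pre}}\to S_{\mathrm{ord}}$ and $B(V)\to s_{\mathrm{ord}}$ respectively.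
   Context: ${}^{G}_{G}\mathcal{YD}$: Yetter–Drinfeld modules over $G$. $V$ has homogeneous basis $x_i$ of $G$-degree $g_i$ with $g\cdot x_i=\chi_i(g)x_i$; $q_{ij}=\chi_j(g_i)$. Cartan type: an integer matrix $(a_{ij})$ with $a_{ii}=2$, $0\le -a_{ij}<\mathrm{ord}(q_{ii})$ ($i\ne j$), $q_{ij}q_{ji}=q_{ii}^{a_{ij}}$; finite Cartan type: the Nichols algebra $B(V)$ is finite-dimensional. For homogeneous $y$, $\mathrm{ad}_{\mathrm{sk}}(x_i)(y)=x_iy-(g_i\cdot y)x_i$, so $\mathrm{ad}_{\mathrm{sk}}(x_i)(x_j)=x_ix_j-q_{ij}x_jx_i$. $R^{\mathrm{pre}}=TV/(\mathrm{ad}_{\mathrm{sk}}(x_i)^{1-a_{ij}}(x_j):i\neq j)$. *)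

theory Defs
  imports Complex_Main "HOL-Combinatorics.Permutations"
begin

text \<open>Noncommutative polynomials in x_0,...,x_{theta-1} (the tensor algebra TV) are
represented as coefficient functions on words (lists of indices).\<close>

type_synonym 'k ncpoly = "nat list \<Rightarrow> 'k"

definition TV :: "nat \<Rightarrow> ('k::field) ncpoly set" where
  "TV \<theta> = {f. finite {w. f w \<noteq> 0} \<and> {w. f w \<noteq> 0} \<subseteq> lists {..<\<theta>}}"

definition mon :: "nat list \<Rightarrow> ('k::field) ncpoly" where
  "mon u = (\<lambda>w. if w = u then 1 else 0)"

definition X :: "nat \<Rightarrow> ('k::field) ncpoly" where
  "X i = mon [i]"

definition ncmult :: "('k::field) ncpoly \<Rightarrow> 'k ncpoly \<Rightarrow> 'k ncpoly" (infixl "\<cdot>\<^sub>T" 70) where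
  "f \<cdot>\<^sub>T h = (\<lambda>w. \<Sum>k\<le>length w. f (take k w) * h (drop k w))"

definition ncadd :: "('k::field) ncpoly \<Rightarrow> 'k ncpoly \<Rightarrow> 'k ncpoly" where
  "ncadd f h = (\<lambda>w. f w + h w)"

definition ncsub :: "('k::field) ncpoly \<Rightarrow> 'k ncpoly \<Rightarrow> 'k ncpoly" where
  "ncsub f h = (\<lambda>w. f w - h w)"

definition ncscale :: "'k::field \<Rightarrow> 'k ncpoly \<Rightarrow> 'k ncpoly" where
  "ncscale c f = (\<lambda>w. c * f w)"

inductive_set ideal_gen :: "nat \<Rightarrow> ('k::field) ncpoly set \<Rightarrow> 'k ncpoly set"
  for \<theta> :: nat and S :: "'k ncpoly set" where
  zero: "(\<lambda>w. 0) \<in> ideal_gen \<theta> S"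
| gen: "s \<in> S \<Longrightarrow> s \<in> ideal_gen \<theta> S"
| add: "f \<in> ideal_gen \<theta> S \<Longrightarrow> h \<in> ideal_gen \<theta> S \<Longrightarrow> ncadd f h \<in> ideal_gen \<theta> S"
| scale: "f \<in> ideal_gen \<theta> S \<Longrightarrow> ncscale c f \<in> ideal_gen \<theta> S"
| lmult: "f \<in> ideal_gen \<theta> S \<Longrightarrow> u \<in> lists {..<\<theta>} \<Longrightarrow> mon u \<cdot>\<^sub>T f \<in> ideal_gen \<theta> S"
| rmult: "f \<in> ideal_gen \<theta> S \<Longrightarrow> u \<in> lists {..<\<theta>} \<Longrightarrow> f \<cdot>\<^sub>T mon u \<in> ideal_gen \<theta> S"

text \<open>Action of the group element g on TV: x_i has character chi_i, extended multiplicatively.\<close>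
definition gact :: "(nat \<Rightarrow> 'g \<Rightarrow> 'k::field) \<Rightarrow> 'g \<Rightarrow> 'k ncpoly \<Rightarrow> 'k ncpoly" where
  "gact \<chi> g f = (\<lambda>w. (\<Prod>k<length w. \<chi> (w ! k) g) * f w)"

definition ad_sk :: "(nat \<Rightarrow> 'g) \<Rightarrow> (nat \<Rightarrow> 'g \<Rightarrow> 'k::field) \<Rightarrow> nat \<Rightarrow> 'k ncpoly \<Rightarrow> 'k ncpoly" where
  "ad_sk g \<chi> i y = ncsub (X i \<cdot>\<^sub>T y) (gact \<chi> (g i) y \<cdot>\<^sub>T X i)"

text \<open>Multiplicative order of a field element (0 if infinite).\<close>
definition mord :: "'k::field \<Rightarrow> nat" where
  "mord z = (if \<exists>n>0. z ^ n = 1 then (LEAST n. n > 0 \<and> z ^ n = 1) else 0)"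

text \<open>Quantum symmetrizer for the diagonal braiding c(x_i \<otimes> x_j) = q_ij x_j \<otimes> x_i,
q_ij = chi_j(g_i), applied to a word u: sum over sigma in S_n of the braid lift of sigma.\<close>
definition qsym_word :: "(nat \<Rightarrow> 'g) \<Rightarrow> (nat \<Rightarrow> 'g \<Rightarrow> 'k::field) \<Rightarrow> nat list \<Rightarrow> 'k ncpoly" where
  "qsym_word g \<chi> u = (\<lambda>w. \<Sum>\<sigma> \<in> {\<sigma>. \<sigma> permutes {..<length u}}.
      if map (\<lambda>p. u ! (inv \<sigma> p)) [0..<length u] = w
      then (\<Prod>(a,b) \<in> {(a,b). a < b \<and> b < length u \<and> \<sigma> b < \<sigma> a}. \<chi> (u ! b) (g (u ! a)))
      else 0)"

definition qsym :: "(nat \<Rightarrow> 'g) \<Rightarrow> (nat \<Rightarrow> 'g \<Rightarrow> 'k::field) \<Rightarrow> 'k ncpoly \<Rightarrow> 'k ncpoly" where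
  "qsym g \<chi> f = (\<lambda>w. \<Sum>u \<in> {u. f u \<noteq> 0}. f u * qsym_word g \<chi> u w)"

text \<open>Kernel of the projection TV -> B(V) (the Nichols ideal = kernel of quantum symmetrizer).\<close>
definition nichols_ideal :: "nat \<Rightarrow> (nat \<Rightarrow> 'g) \<Rightarrow> (nat \<Rightarrow> 'g \<Rightarrow> 'k::field) \<Rightarrow> 'k ncpoly set" where
  "nichols_ideal \<theta> g \<chi> = {f \<in> TV \<theta>. qsym g \<chi> f = (\<lambda>w. 0)}"

definition nichols_fin_dim :: "nat \<Rightarrow> (nat \<Rightarrow> 'g) \<Rightarrow> (nat \<Rightarrow> 'g \<Rightarrow> 'k::field) \<Rightarrow> bool" where
  "nichols_fin_dim \<theta> g \<chi> \<longleftrightarrow> (\<exists>F. finite F \<and> F \<subseteq> TV \<theta> \<and>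
     (\<forall>f \<in> TV \<theta>. \<exists>c. ncsub f (\<lambda>w. \<Sum>h\<in>F. c h * h w) \<in> nichols_ideal \<theta> g \<chi>))"

definition cartan_type :: "nat \<Rightarrow> (nat \<Rightarrow> 'g) \<Rightarrow> (nat \<Rightarrow> 'g \<Rightarrow> 'k::field) \<Rightarrow> (nat \<Rightarrow> nat \<Rightarrow> int) \<Rightarrow> bool" where
  "cartan_type \<theta> g \<chi> a \<longleftrightarrow>
     (\<forall>i<\<theta>. a i i = 2) \<and>
     (\<forall>i<\<theta>. \<forall>j<\<theta>. i \<noteq> j \<longrightarrow>
        0 \<le> - a i j \<and> - a i j < int (mord (\<chi> i (g i))) \<and>
        \<chi> j (g i) * \<chi> i (g j) = (\<chi> i (g i)) powi (a i j))"

definition finite_cartan_type :: "nat \<Rightarrow> (nat \<Rightarrow> 'g) \<Rightarrow> (nat \<Rightarrow> 'g \<Rightarrow> 'k::field) \<Rightarrow> (nat \<Rightarrow> nat \<Rightarrow> int) \<Rightarrow> bool" where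
  "finite_cartan_type \<theta> g \<chi> a \<longleftrightarrow> cartan_type \<theta> g \<chi> a \<and> nichols_fin_dim \<theta> g \<chi>"

text \<open>Generalized Cartan matrix of finite type (i.e. block sum of Cartan matrices of
Dynkin diagrams): symmetrizable with positive definite symmetrization.\<close>
definition finite_type_cartan_matrix :: "nat \<Rightarrow> (nat \<Rightarrow> nat \<Rightarrow> int) \<Rightarrow> bool" where
  "finite_type_cartan_matrix \<theta> a \<longleftrightarrow>
     (\<forall>i<\<theta>. a i i = 2) \<and> (\<forall>i<\<theta>. \<forall>j<\<theta>. i \<noteq> j \<longrightarrow> a i j \<le> 0 \<and> (a i j = 0 \<longleftrightarrow> a j i = 0)) \<and>
     (\<exists>d :: nat \<Rightarrow> real. (\<forall>i<\<theta>. d i > 0) \<and> (\<forall>i<\<theta>. \<forall>j<\<theta>. d i * a i j = d j * a j i) \<and>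
        (\<forall>x :: nat \<Rightarrow> real. (\<exists>i<\<theta>. x i \<noteq> 0) \<longrightarrow>
           (\<Sum>i<\<theta>. \<Sum>j<\<theta>. x i * d i * a i j * x j) > 0))"

definition dynkin_adj :: "nat \<Rightarrow> (nat \<Rightarrow> nat \<Rightarrow> int) \<Rightarrow> nat \<Rightarrow> nat \<Rightarrow> bool" where
  "dynkin_adj \<theta> a i j \<longleftrightarrow> i < \<theta> \<and> j < \<theta> \<and> i \<noteq> j \<and> a i j \<noteq> 0"

definition component :: "nat \<Rightarrow> (nat \<Rightarrow> nat \<Rightarrow> int) \<Rightarrow> nat \<Rightarrow> nat set" where
  "component \<theta> a i = {j. j < \<theta> \<and> (dynkin_adj \<theta> a)\<^sup>*\<^sup>* i j}"

text \<open>Block-diagonal ordering: every connected component is an interval of indices.\<close>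
definition block_diagonal :: "nat \<Rightarrow> (nat \<Rightarrow> nat \<Rightarrow> int) \<Rightarrow> bool" where
  "block_diagonal \<theta> a \<longleftrightarrow>
     (\<forall>i j k. i < j \<and> j < k \<and> k < \<theta> \<and> k \<in> component \<theta> a i \<longrightarrow> j \<in> component \<theta> a i)"

definition in_G2_component :: "nat \<Rightarrow> (nat \<Rightarrow> nat \<Rightarrow> int) \<Rightarrow> nat \<Rightarrow> bool" where
  "in_G2_component \<theta> a i \<longleftrightarrow>
     (\<exists>j. j \<noteq> i \<and> component \<theta> a i = {i, j} \<and> {a i j, a j i} = {-1, -3})"

definition Rpre_rels :: "nat \<Rightarrow> (nat \<Rightarrow> 'g) \<Rightarrow> (nat \<Rightarrow> 'g \<Rightarrow> 'k::field) \<Rightarrow> (nat \<Rightarrow> nat \<Rightarrow> int) \<Rightarrow> 'k ncpoly set" where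
  "Rpre_rels \<theta> g \<chi> a = {(ad_sk g \<chi> i ^^ nat (1 - a i j)) (X j) | i j. i < \<theta> \<and> j < \<theta> \<and> i \<noteq> j}"

definition Sord_rels :: "nat \<Rightarrow> (nat \<Rightarrow> 'g) \<Rightarrow> (nat \<Rightarrow> 'g \<Rightarrow> 'k::field) \<Rightarrow> 'k ncpoly set" where
  "Sord_rels \<theta> g \<chi> = {ad_sk g \<chi> i (X j) | i j. i < j \<and> j < \<theta>}"

definition sord_rels :: "nat \<Rightarrow> (nat \<Rightarrow> 'g) \<Rightarrow> (nat \<Rightarrow> 'g \<Rightarrow> 'k::field) \<Rightarrow> 'k ncpoly set" where
  "sord_rels \<theta> g \<chi> = Sord_rels \<theta> g \<chi> \<union> {mon (replicate (mord (\<chi> i (g i))) i) | i. i < \<theta>}"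

end

theory Submission
  imports Defs
begin


lemma mon_mult_left: "(mon u \<cdot>\<^sub>T f) w = (if take (length u) w = u then f (drop (length u) w) else 0)"
proof -
  have "(mon u \<cdot>\<^sub>T f) w = (\<Sum>k\<in>{..length w}. if k = length u then (if take k w = u then f (drop k w) else 0) else 0)"
    unfolding ncmult_def mon_def
    by (rule sum.cong) auto
  also have "\<dots> = (if take (length u) w = u then f (drop (length u) w) else 0)"
    by (subst sum.delta) (auto dest: arg_cong[where f=length])
  finally show ?thesis .
qed

lemma mon_mult_right: "(f \<cdot>\<^sub>T mon u) w = (if length u \<le> length w \<and> drop (length w - length u) w = u then f (take (length w - length u) w) else 0)"
proof -
  have "(f \<cdot>\<^sub>T mon u) w = (\<Sum>k\<in>{..length w}. if k = length w - length u then (if length u \<le> length w \<and> drop k w = u then f (take k w) else 0) else 0)"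
    unfolding ncmult_def mon_def
    by (rule sum.cong) auto
  also have "\<dots> = (if length u \<le> length w \<and> drop (length w - length u) w = u then f (take (length w - length u) w) else 0)"
    by (subst sum.delta) auto
  finally show ?thesis .
qed

lemma mon_mult_mon: "mon u \<cdot>\<^sub>T mon v = (mon (u @ v) :: 'k::field ncpoly)"
proof
  fix w
  show "(mon u \<cdot>\<^sub>T mon v) w = (mon (u @ v) :: 'k ncpoly) w"
    unfolding mon_mult_left by (auto simp: mon_def) (metis append_take_drop_id)+
qed

lemma ncsub_mult_left: "ncsub f h \<cdot>\<^sub>T k = ncsub (f \<cdot>\<^sub>T k) (h \<cdot>\<^sub>T k)"
  unfolding ncsub_def ncmult_def by (auto simp: algebra_simps sum_subtractf)
lemma ncsub_mult_right: "k \<cdot>\<^sub>T ncsub f h = ncsub (k \<cdot>\<^sub>T f) (k \<cdot>\<^sub>T h)"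
  unfolding ncsub_def ncmult_def by (auto simp: algebra_simps sum_subtractf)
lemma ncscale_mult_left: "ncscale c f \<cdot>\<^sub>T k = ncscale c (f \<cdot>\<^sub>T k)"
  unfolding ncscale_def ncmult_def by (auto simp: algebra_simps sum_distrib_left)
lemma ncscale_mult_right: "k \<cdot>\<^sub>T ncscale c f = ncscale c (k \<cdot>\<^sub>T f)"
  unfolding ncscale_def ncmult_def by (auto simp: algebra_simps sum_distrib_left)

lemma ideal_sub: "f \<in> ideal_gen \<theta> S \<Longrightarrow> h \<in> ideal_gen \<theta> S \<Longrightarrow> ncsub f h \<in> ideal_gen \<theta> S"
proof -
  assume "f \<in> ideal_gen \<theta> S" "h \<in> ideal_gen \<theta> S"
  hence "ncadd f (ncscale (-1) h) \<in> ideal_gen \<theta> S" by (intro ideal_gen.add ideal_gen.scale)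
  moreover have "ncadd f (ncscale (-1) h) = ncsub f h" by (auto simp: ncadd_def ncscale_def ncsub_def)
  ultimately show ?thesis by simp
qed

lemma ideal_sum: "finite A \<Longrightarrow> (\<And>a. a \<in> A \<Longrightarrow> h a \<in> ideal_gen \<theta> S) \<Longrightarrow> (\<lambda>w. \<Sum>a\<in>A. h a w) \<in> ideal_gen \<theta> S"
proof (induction A rule: finite_induct)
  case empty
  then show ?case using ideal_gen.zero by simp
next
  case (insert x F)
  have "ncadd (h x) (\<lambda>w. \<Sum>a\<in>F. h a w) \<in> ideal_gen \<theta> S"
    using insert by (intro ideal_gen.add) auto
  moreover have "ncadd (h x) (\<lambda>w. \<Sum>a\<in>F. h a w) = (\<lambda>w. \<Sum>a\<in>insert x F. h a w)"
    using insert by (auto simp: ncadd_def)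
  ultimately show ?case by simp
qed

lemma ideal_mono: "S \<subseteq> ideal_gen \<theta> T \<Longrightarrow> ideal_gen \<theta> S \<subseteq> ideal_gen \<theta> T"
proof
  fix f assume S: "S \<subseteq> ideal_gen \<theta> T" and f: "f \<in> ideal_gen \<theta> S"
  from f show "f \<in> ideal_gen \<theta> T"
    by (induction rule: ideal_gen.induct) (use S in \<open>auto intro: ideal_gen.intros\<close>)
qed

lemma ideal_sandwich: "f \<in> ideal_gen \<theta> S \<Longrightarrow> p \<in> lists {..<\<theta>} \<Longrightarrow> r \<in> lists {..<\<theta>} \<Longrightarrow>
   mon p \<cdot>\<^sub>T (f \<cdot>\<^sub>T mon r) \<in> ideal_gen \<theta> S"
  by (intro ideal_gen.lmult ideal_gen.rmult)

definition qq :: "(nat \<Rightarrow> 'g) \<Rightarrow> (nat \<Rightarrow> 'g \<Rightarrow> 'k::field) \<Rightarrow> nat \<Rightarrow> nat \<Rightarrow> 'k" where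
  "qq g \<chi> a b = \<chi> b (g a)"

definition Am :: "(nat \<Rightarrow> 'g) \<Rightarrow> (nat \<Rightarrow> 'g \<Rightarrow> 'k::field) \<Rightarrow> nat \<Rightarrow> nat multiset \<Rightarrow> 'k" where
  "Am g \<chi> x M = prod_mset (image_mset (qq g \<chi> x) (filter_mset (\<lambda>z. x < z) M))"

definition Bm :: "(nat \<Rightarrow> 'g) \<Rightarrow> (nat \<Rightarrow> 'g \<Rightarrow> 'k::field) \<Rightarrow> nat \<Rightarrow> nat multiset \<Rightarrow> 'k" where
  "Bm g \<chi> x M = prod_mset (image_mset (\<lambda>z. qq g \<chi> z x) (filter_mset (\<lambda>z. z < x) M))"

fun Dw :: "(nat \<Rightarrow> 'g) \<Rightarrow> (nat \<Rightarrow> 'g \<Rightarrow> 'k::field) \<Rightarrow> nat list \<Rightarrow> 'k" where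
  "Dw g \<chi> [] = 1"
| "Dw g \<chi> (x # u) = Am g \<chi> x (mset u) * Dw g \<chi> u"

lemma Dw_snoc: "Dw g \<chi> (u @ [i]) = Dw g \<chi> u * Bm g \<chi> i (mset u)"
  by (induction u) (auto simp: Am_def Bm_def)

locale chars_nz =
  fixes \<theta> :: nat and g :: "nat \<Rightarrow> 'g" and \<chi> :: "nat \<Rightarrow> 'g \<Rightarrow> 'k::field"
  assumes nz: "\<And>b x. b < \<theta> \<Longrightarrow> \<chi> b x \<noteq> 0"
begin

lemma qq_nz: "b < \<theta> \<Longrightarrow> qq g \<chi> a b \<noteq> 0"
  by (simp add: qq_def nz)

lemma Am_nz: "x < \<theta> \<Longrightarrow> set_mset M \<subseteq> {..<\<theta>} \<Longrightarrow> Am g \<chi> x M \<noteq> 0"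
  unfolding Am_def using qq_nz by (auto simp: prod_mset_zero_iff)

lemma Dw_nz: "u \<in> lists {..<\<theta>} \<Longrightarrow> Dw g \<chi> u \<noteq> 0"
proof (induction u)
  case (Cons a u)
  then have "set_mset (mset u) \<subseteq> {..<\<theta>}" by auto
  with Cons show ?case using Am_nz[of a "mset u"] by auto
qed simp

definition Eqv :: "'k ncpoly set \<Rightarrow> nat list \<Rightarrow> nat list \<Rightarrow> bool" where
  "Eqv S u v \<longleftrightarrow> ncsub (mon u) (ncscale (Dw g \<chi> u / Dw g \<chi> v) (mon v)) \<in> ideal_gen \<theta> S"

lemma Eqv_refl: "u \<in> lists {..<\<theta>} \<Longrightarrow> Eqv S u u"
proof -
  assume u: "u \<in> lists {..<\<theta>}"
  have "ncsub (mon u) (ncscale (Dw g \<chi> u / Dw g \<chi> u) (mon u)) = (\<lambda>w. 0)"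
    using Dw_nz[OF u] by (auto simp: ncsub_def ncscale_def)
  then show ?thesis unfolding Eqv_def using ideal_gen.zero by metis
qed

lemma Eqv_trans: "Eqv S u v \<Longrightarrow> Eqv S v w \<Longrightarrow> v \<in> lists {..<\<theta>} \<Longrightarrow> Eqv S u w"
proof -
  assume uv: "Eqv S u v" and vw: "Eqv S v w" and v: "v \<in> lists {..<\<theta>}"
  let ?c = "Dw g \<chi> u / Dw g \<chi> v"
  have "ncadd (ncsub (mon u) (ncscale ?c (mon v))) (ncscale ?c (ncsub (mon v) (ncscale (Dw g \<chi> v / Dw g \<chi> w) (mon w))))
     \<in> ideal_gen \<theta> S"
    using uv vw unfolding Eqv_def by (intro ideal_gen.add ideal_gen.scale)
  moreover have "ncadd (ncsub (mon u) (ncscale ?c (mon v))) (ncscale ?c (ncsub (mon v) (ncscale (Dw g \<chi> v / Dw g \<chi> w) (mon w))))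
     = ncsub (mon u) (ncscale (Dw g \<chi> u / Dw g \<chi> w) (mon w))"
    using Dw_nz[OF v] by (auto simp: ncadd_def ncsub_def ncscale_def field_simps)
  ultimately show ?thesis unfolding Eqv_def by simp
qed

lemma Eqv_cons: "Eqv S u v \<Longrightarrow> mset u = mset v \<Longrightarrow> x < \<theta> \<Longrightarrow> v \<in> lists {..<\<theta>} \<Longrightarrow> Eqv S (x # u) (x # v)"
proof -
  assume uv: "Eqv S u v" and m: "mset u = mset v" and x: "x < \<theta>" and v: "v \<in> lists {..<\<theta>}"
  have sv: "set_mset (mset v) \<subseteq> {..<\<theta>}" using v by auto
  have "mon [x] \<cdot>\<^sub>T ncsub (mon u) (ncscale (Dw g \<chi> u / Dw g \<chi> v) (mon v)) \<in> ideal_gen \<theta> S"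
    using uv x unfolding Eqv_def by (intro ideal_gen.lmult) auto
  moreover have "mon [x] \<cdot>\<^sub>T ncsub (mon u) (ncscale (Dw g \<chi> u / Dw g \<chi> v) (mon v))
     = ncsub (mon (x # u)) (ncscale (Dw g \<chi> (x # u) / Dw g \<chi> (x # v)) (mon (x # v)))"
    using Am_nz[OF x sv] m by (simp add: ncsub_mult_right ncscale_mult_right mon_mult_mon)
  ultimately show ?thesis unfolding Eqv_def by simp
qed

lemma gact_X: "gact \<chi>' h (X x) = ncscale (\<chi>' x h) (X x)"
  by (auto simp: gact_def X_def mon_def ncscale_def)

lemma ad_sk_X: "ad_sk g \<chi> y (X x) = ncsub (mon [y, x]) (ncscale (qq g \<chi> y x) (mon [x, y]))"
  unfolding ad_sk_def gact_X by (simp add: X_def ncscale_mult_left mon_mult_mon qq_def)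

lemma Eqv_swap:
  assumes S: "Sord_rels \<theta> g \<chi> \<subseteq> S" and yx: "y < x" and x: "x < \<theta>" and r: "r \<in> lists {..<\<theta>}"
  shows "Eqv S (x # y # r) (y # x # r)"
proof -
  have "ad_sk g \<chi> y (X x) \<in> Sord_rels \<theta> g \<chi>" unfolding Sord_rels_def using yx x by blast
  hence "ncscale (- (1 / qq g \<chi> y x)) (ad_sk g \<chi> y (X x)) \<cdot>\<^sub>T mon r \<in> ideal_gen \<theta> S"
    using S r by (intro ideal_gen.rmult ideal_gen.scale ideal_gen.gen) auto
  moreover have q: "qq g \<chi> y x \<noteq> 0" using qq_nz x by auto
  have sr: "set_mset (mset r) \<subseteq> {..<\<theta>}" using r by auto
  have "Dw g \<chi> (x # y # r) / Dw g \<chi> (y # x # r) = 1 / qq g \<chi> y x"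
    using yx q Am_nz[OF x sr] Am_nz[of y "mset r"] x yx sr Dw_nz[OF r]
    by (simp add: Am_def field_simps)
  moreover have "ncscale (- (1 / qq g \<chi> y x)) (ad_sk g \<chi> y (X x)) \<cdot>\<^sub>T mon r
     = ncsub (mon (x # y # r)) (ncscale (1 / qq g \<chi> y x) (mon (y # x # r)))"
    unfolding ad_sk_X ncscale_mult_left ncsub_mult_left mon_mult_mon
    using q by (auto simp: ncsub_def ncscale_def field_simps)
  ultimately show ?thesis unfolding Eqv_def by simp
qed

lemma Eqv_insort:
  assumes S: "Sord_rels \<theta> g \<chi> \<subseteq> S" and x: "x < \<theta>" and v: "v \<in> lists {..<\<theta>}"
  shows "Eqv S (x # v) (insort x v)"
  using v
proof (induction v)
  case Nil
  then show ?case using x Eqv_refl by simp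
next
  case (Cons y v)
  show ?case
  proof (cases "x \<le> y")
    case True
    then show ?thesis using Eqv_refl Cons x by simp
  next
    case False
    have "Eqv S (x # y # v) (y # x # v)" using Eqv_swap[OF S _ x] False Cons by auto
    moreover have "Eqv S (y # x # v) (y # insort x v)"
    proof -
      have "insort x v \<in> lists {..<\<theta>}" using Cons x by (auto simp: set_insort_key)
      then show ?thesis using Eqv_cons[OF Cons.IH] Cons x by auto
    qed
    ultimately show ?thesis using False Eqv_trans Cons x by auto
  qed
qed

lemma Eqv_sort:
  assumes S: "Sord_rels \<theta> g \<chi> \<subseteq> S" and u: "u \<in> lists {..<\<theta>}"
  shows "Eqv S u (sort u)"
  using u
proof (induction u)
  case Nil
  then show ?case using Eqv_refl by simp
next
  case (Cons x u)
  have "sort u \<in> lists {..<\<theta>}" using Cons by auto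
  hence "Eqv S (x # u) (x # sort u)" using Eqv_cons[OF Cons.IH] Cons by auto
  moreover have "Eqv S (x # sort u) (insort x (sort u))" using Eqv_insort[OF S] Cons \<open>sort u \<in> lists {..<\<theta>}\<close> by auto
  ultimately show ?case using Eqv_trans[of S "x # u" "x # sort u"] Cons \<open>sort u \<in> lists {..<\<theta>}\<close> by auto
qed

end

definition PM :: "nat multiset \<Rightarrow> nat list set" where
  "PM M = {u. mset u = M}"

lemma finite_PM: "finite (PM M)"
proof -
  have "PM M \<subseteq> {xs. set xs \<subseteq> set_mset M \<and> length xs = size M}"
    unfolding PM_def by auto
  moreover have "finite {xs. set xs \<subseteq> set_mset M \<and> length xs = size M}"
    by (rule finite_lists_length_eq) simp
  ultimately show ?thesis by (rule finite_subset)
qed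

definition Lam :: "(nat \<Rightarrow> 'g) \<Rightarrow> (nat \<Rightarrow> 'g \<Rightarrow> 'k::field) \<Rightarrow> nat multiset \<Rightarrow> 'k ncpoly \<Rightarrow> 'k" where
  "Lam g \<chi> M f = (\<Sum>u\<in>PM M. f u * Dw g \<chi> u)"

context chars_nz
begin

lemma criterion:
  assumes S: "Sord_rels \<theta> g \<chi> \<subseteq> S" and M: "set_mset M \<subseteq> {..<\<theta>}"
    and supp: "\<And>w. f w \<noteq> 0 \<Longrightarrow> mset w = M"
    and alt: "Lam g \<chi> M f = 0 \<or> mon (sorted_list_of_multiset M) \<in> ideal_gen \<theta> S"
  shows "f \<in> ideal_gen \<theta> S"
proof -
  define v where "v = sorted_list_of_multiset M"
  have mv: "mset v = M" unfolding v_def by simp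
  have v: "v \<in> lists {..<\<theta>}" using M unfolding v_def by auto
  have uL: "u \<in> lists {..<\<theta>}" if "u \<in> PM M" for u
    using that M unfolding PM_def by (auto simp flip: set_mset_mset)
  have us: "sort u = v" if "u \<in> PM M" for u
    using that unfolding PM_def v_def by (auto simp flip: sorted_list_of_multiset_mset)
  define T where "T = (\<lambda>w. \<Sum>u\<in>PM M. ncscale (f u) (ncsub (mon u) (ncscale (Dw g \<chi> u / Dw g \<chi> v) (mon v))) w)"
  have T: "T \<in> ideal_gen \<theta> S"
    unfolding T_def
  proof (rule ideal_sum[OF finite_PM])
    fix u assume u: "u \<in> PM M"
    have "Eqv S u (sort u)" using Eqv_sort[OF S uL[OF u]] .
    then show "ncscale (f u) (ncsub (mon u) (ncscale (Dw g \<chi> u / Dw g \<chi> v) (mon v))) \<in> ideal_gen \<theta> S"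
      unfolding Eqv_def us[OF u] by (rule ideal_gen.scale)
  qed
  have R: "ncscale (Lam g \<chi> M f / Dw g \<chi> v) (mon v) \<in> ideal_gen \<theta> S"
  proof (cases "Lam g \<chi> M f = 0")
    case True
    then have "ncscale (Lam g \<chi> M f / Dw g \<chi> v) (mon v) = (\<lambda>w. 0)" by (auto simp: ncscale_def)
    then show ?thesis using ideal_gen.zero by metis
  next
    case False
    then show ?thesis using alt unfolding v_def by (auto intro: ideal_gen.scale)
  qed
  have "ncadd T (ncscale (Lam g \<chi> M f / Dw g \<chi> v) (mon v)) = f"
  proof
    fix w
    have "T w = (\<Sum>u\<in>PM M. f u * mon u w) - (\<Sum>u\<in>PM M. f u * Dw g \<chi> u) / Dw g \<chi> v * mon v w"
      unfolding T_def ncscale_def ncsub_def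
      by (simp add: algebra_simps sum_subtractf sum_distrib_right sum_distrib_left sum_divide_distrib)
    also have "(\<Sum>u\<in>PM M. f u * mon u w) = f w"
    proof -
      have "(\<Sum>u\<in>PM M. f u * mon u w) = (\<Sum>u\<in>PM M. if w = u then f u else 0)"
        by (rule sum.cong) (auto simp: mon_def)
      also have "\<dots> = f w" using supp[of w] by (subst sum.delta'[OF finite_PM]) (auto simp: PM_def)
      finally show ?thesis .
    qed
    finally show "ncadd T (ncscale (Lam g \<chi> M f / Dw g \<chi> v) (mon v)) w = f w"
      unfolding ncadd_def ncscale_def Lam_def by simp
  qed
  moreover have "ncadd T (ncscale (Lam g \<chi> M f / Dw g \<chi> v) (mon v)) \<in> ideal_gen \<theta> S"
    using T R by (rule ideal_gen.add)
  ultimately show ?thesis by simp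
qed

end

lemma X_mult_left: "(X i \<cdot>\<^sub>T f) w = (case w of [] \<Rightarrow> 0 | z # w' \<Rightarrow> if z = i then f w' else 0)"
  unfolding X_def mon_mult_left by (cases w) auto

lemma X_mult_right: "(f \<cdot>\<^sub>T X i) w = (if w \<noteq> [] \<and> last w = i then f (butlast w) else 0)"
  unfolding X_def mon_mult_right
  by (cases w rule: rev_cases) auto

lemma Lam_left: "Lam g \<chi> (add_mset i M) (X i \<cdot>\<^sub>T f) = Am g \<chi> i M * Lam g \<chi> M f"
proof -
  have "Lam g \<chi> (add_mset i M) (X i \<cdot>\<^sub>T f) = (\<Sum>u\<in>(Cons i) ` PM M. (X i \<cdot>\<^sub>T f) u * Dw g \<chi> u)"
    unfolding Lam_def
  proof (rule sum.mono_neutral_right[OF finite_PM])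
    show "(Cons i) ` PM M \<subseteq> PM (add_mset i M)" by (auto simp: PM_def)
    show "\<forall>u\<in>PM (add_mset i M) - (Cons i) ` PM M. (X i \<cdot>\<^sub>T f) u * Dw g \<chi> u = 0"
    proof
      fix u assume u: "u \<in> PM (add_mset i M) - (Cons i) ` PM M"
      show "(X i \<cdot>\<^sub>T f) u * Dw g \<chi> u = 0"
      proof (cases u)
        case (Cons z w')
        then show ?thesis using u by (auto simp: X_mult_left PM_def image_iff)
      qed (simp add: X_mult_left)
    qed
  qed
  also have "\<dots> = (\<Sum>u\<in>PM M. (X i \<cdot>\<^sub>T f) (i # u) * Dw g \<chi> (i # u))"
    by (subst sum.reindex) auto
  also have "\<dots> = Am g \<chi> i M * Lam g \<chi> M f"
    unfolding Lam_def sum_distrib_left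
    by (rule sum.cong) (auto simp: X_mult_left PM_def)
  finally show ?thesis .
qed

lemma Lam_right: "Lam g \<chi> (add_mset i M) (f \<cdot>\<^sub>T X i) = Bm g \<chi> i M * Lam g \<chi> M f"
proof -
  have "Lam g \<chi> (add_mset i M) (f \<cdot>\<^sub>T X i) = (\<Sum>u\<in>(\<lambda>u. u @ [i]) ` PM M. (f \<cdot>\<^sub>T X i) u * Dw g \<chi> u)"
    unfolding Lam_def
  proof (rule sum.mono_neutral_right[OF finite_PM])
    show "(\<lambda>u. u @ [i]) ` PM M \<subseteq> PM (add_mset i M)" by (auto simp: PM_def)
    show "\<forall>u\<in>PM (add_mset i M) - (\<lambda>u. u @ [i]) ` PM M. (f \<cdot>\<^sub>T X i) u * Dw g \<chi> u = 0"
    proof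
      fix u assume u: "u \<in> PM (add_mset i M) - (\<lambda>u. u @ [i]) ` PM M"
      show "(f \<cdot>\<^sub>T X i) u * Dw g \<chi> u = 0"
      proof (cases u rule: rev_cases)
        case (snoc w' z)
        then show ?thesis using u by (auto simp: X_mult_right PM_def image_iff)
      qed (simp add: X_mult_right)
    qed
  qed
  also have "\<dots> = (\<Sum>u\<in>PM M. (f \<cdot>\<^sub>T X i) (u @ [i]) * Dw g \<chi> (u @ [i]))"
    by (subst sum.reindex) (auto simp: inj_on_def)
  also have "\<dots> = Bm g \<chi> i M * Lam g \<chi> M f"
    unfolding Lam_def sum_distrib_left
    by (rule sum.cong) (auto simp: X_mult_right PM_def Dw_snoc)
  finally show ?thesis .
qed

lemma prod_nth_mset: "(\<Prod>k<length w. F (w ! k)) = prod_mset (image_mset F (mset w))"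
  by (induction w) (auto simp del: prod.lessThan_Suc simp add: prod.lessThan_Suc_shift)

lemma gact_homog:
  assumes "\<And>w. f w \<noteq> 0 \<Longrightarrow> mset w = M"
  shows "gact \<chi> h f = ncscale (prod_mset (image_mset (\<lambda>z. \<chi> z h) M)) f"
proof
  fix w
  show "gact \<chi> h f w = ncscale (prod_mset (image_mset (\<lambda>z. \<chi> z h) M)) f w"
    using assms[of w] unfolding gact_def ncscale_def prod_nth_mset[of "\<lambda>z. \<chi> z h"]
    by (cases "f w = 0") auto
qed

lemma Lam_sub: "Lam g \<chi> M (ncsub f h) = Lam g \<chi> M f - Lam g \<chi> M h"
  unfolding Lam_def ncsub_def by (simp add: algebra_simps sum_subtractf)

lemma Lam_scale: "Lam g \<chi> M (ncscale c f) = c * Lam g \<chi> M f"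
  unfolding Lam_def ncscale_def by (simp add: algebra_simps sum_distrib_left)

definition Mk :: "nat \<Rightarrow> nat \<Rightarrow> nat \<Rightarrow> nat multiset" where
  "Mk i j k = add_mset j (replicate_mset k i)"

definition phi :: "(nat \<Rightarrow> 'g) \<Rightarrow> (nat \<Rightarrow> 'g \<Rightarrow> 'k::field) \<Rightarrow> nat \<Rightarrow> nat \<Rightarrow> nat \<Rightarrow> 'k" where
  "phi g \<chi> i j m = Am g \<chi> i (Mk i j m) - prod_mset (image_mset (\<lambda>z. \<chi> z (g i)) (Mk i j m)) * Bm g \<chi> i (Mk i j m)"

lemma ad_iter:
  "(\<forall>w. (ad_sk g \<chi> i ^^ k) (X j) w \<noteq> 0 \<longrightarrow> mset w = Mk i j k) \<and>
   Lam g \<chi> (Mk i j k) ((ad_sk g \<chi> i ^^ k) (X j)) = (\<Prod>m<k. phi g \<chi> i j m)"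
proof (induction k)
  case 0
  have "Lam g \<chi> {#j#} (X j) = 1"
  proof -
    have "Lam g \<chi> {#j#} (X j) = (\<Sum>u\<in>PM {#j#}. if u = [j] then Dw g \<chi> u else 0)"
      unfolding Lam_def X_def mon_def by (rule sum.cong) auto
    also have "\<dots> = 1" by (subst sum.delta[OF finite_PM]) (auto simp: PM_def Am_def)
    finally show ?thesis .
  qed
  then show ?case by (auto simp: X_def mon_def Mk_def)
next
  case (Suc k)
  let ?y = "(ad_sk g \<chi> i ^^ k) (X j)"
  have supp: "\<And>w. ?y w \<noteq> 0 \<Longrightarrow> mset w = Mk i j k" using Suc.IH by blast
  have MS: "Mk i j (Suc k) = add_mset i (Mk i j k)" by (simp add: Mk_def)
  have y1: "(ad_sk g \<chi> i ^^ Suc k) (X j) = ncsub (X i \<cdot>\<^sub>T ?y) (ncscale (prod_mset (image_mset (\<lambda>z. \<chi> z (g i)) (Mk i j k))) ?y \<cdot>\<^sub>T X i)"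
  proof -
    have "gact \<chi> (g i) ?y = ncscale (prod_mset (image_mset (\<lambda>z. \<chi> z (g i)) (Mk i j k))) ?y"
      by (rule gact_homog) (rule supp)
    then show ?thesis by (simp add: ad_sk_def)
  qed
  have s1: "mset w = Mk i j (Suc k)" if "(ad_sk g \<chi> i ^^ Suc k) (X j) w \<noteq> 0" for w
  proof -
    from that have "(X i \<cdot>\<^sub>T ?y) w \<noteq> 0 \<or> (?y \<cdot>\<^sub>T X i) w \<noteq> 0"
      unfolding y1 ncscale_mult_left by (auto simp: ncsub_def ncscale_def)
    then show ?thesis
    proof
      assume "(X i \<cdot>\<^sub>T ?y) w \<noteq> 0"
      then show ?thesis using supp MS by (cases w) (auto simp: X_mult_left split: if_splits)
    next
      assume "(?y \<cdot>\<^sub>T X i) w \<noteq> 0"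
      then show ?thesis using supp MS by (cases w rule: rev_cases) (auto simp: X_mult_right split: if_splits)
    qed
  qed
  have "Lam g \<chi> (Mk i j (Suc k)) ((ad_sk g \<chi> i ^^ Suc k) (X j)) = phi g \<chi> i j k * (\<Prod>m<k. phi g \<chi> i j m)"
    unfolding y1 MS Lam_sub ncscale_mult_left Lam_scale Lam_left Lam_right
    using Suc.IH by (simp add: phi_def algebra_simps)
  then show ?case using s1 by (simp add: mult.commute)
qed

lemma filter_replicate_mset: "filter_mset P (replicate_mset n x) = (if P x then replicate_mset n x else {#})"
  by (induction n) auto

lemma phi_zero:
  fixes \<chi> :: "nat \<Rightarrow> 'g \<Rightarrow> 'k::field"
  assumes ij: "i \<noteq> j" and a: "a \<le> 0"
    and cart: "\<chi> j (g i) * \<chi> i (g j) = (\<chi> i (g i)) powi a"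
    and q: "\<chi> i (g i) \<noteq> 0"
  shows "\<exists>m < nat (1 - a). phi g \<chi> i j m = 0"
proof (cases "i < j")
  case True
  have "phi g \<chi> i j 0 = 0" using True by (simp add: phi_def Mk_def Am_def Bm_def qq_def)
  then show ?thesis using a by (intro exI[of _ 0]) auto
next
  case False
  hence ji: "j < i" using ij by auto
  define m where "m = nat (- a)"
  have am: "a = - int m" using a unfolding m_def by simp
  have "phi g \<chi> i j m = 1 - \<chi> j (g i) * \<chi> i (g i) ^ m * \<chi> i (g j)"
    using ji by (simp add: phi_def Mk_def Am_def Bm_def qq_def filter_replicate_mset)
  also have "\<dots> = 1 - (\<chi> j (g i) * \<chi> i (g j)) * \<chi> i (g i) ^ m" by (simp add: algebra_simps)
  also have "\<dots> = 0" unfolding cart am using q by (simp add: power_int_minus)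
  finally show ?thesis using a unfolding m_def by (intro exI[of _ "nat (- a)"]) auto
qed

context chars_nz
begin

lemma part1_gen:
  assumes S: "Sord_rels \<theta> g \<chi> \<subseteq> S" and i: "i < \<theta>" and j: "j < \<theta>" and ij: "i \<noteq> j" and a: "a \<le> 0"
    and cart: "\<chi> j (g i) * \<chi> i (g j) = (\<chi> i (g i)) powi a"
  shows "(ad_sk g \<chi> i ^^ nat (1 - a)) (X j) \<in> ideal_gen \<theta> S"
proof (rule criterion[OF S])
  show "set_mset (Mk i j (nat (1 - a))) \<subseteq> {..<\<theta>}" using i j by (auto simp: Mk_def)
  show "\<And>w. (ad_sk g \<chi> i ^^ nat (1 - a)) (X j) w \<noteq> 0 \<Longrightarrow> mset w = Mk i j (nat (1 - a))"
    using ad_iter by blast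
  obtain m where m: "m < nat (1 - a)" "phi g \<chi> i j m = 0"
    using phi_zero[of i j a \<chi> g, OF ij a cart nz[OF i]] by blast
  have P0: "(\<Prod>m<nat (1 - a). phi g \<chi> i j m) = 0"
    using m by (intro prod_zero) auto
  have L: "Lam g \<chi> (Mk i j (nat (1 - a))) ((ad_sk g \<chi> i ^^ nat (1 - a)) (X j)) = (\<Prod>m<nat (1 - a). phi g \<chi> i j m)"
    using ad_iter by blast
  show "Lam g \<chi> (Mk i j (nat (1 - a))) ((ad_sk g \<chi> i ^^ nat (1 - a)) (X j)) = 0 \<or> mon (sorted_list_of_multiset (Mk i j (nat (1 - a)))) \<in> ideal_gen \<theta> S"
    by (rule disjI1) (simp only: L P0)
qed

end



definition ins :: "nat \<Rightarrow> nat \<Rightarrow> nat" where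
  "ins p v = (if v < p then v else Suc v)"

definition dl :: "nat \<Rightarrow> nat \<Rightarrow> nat" where
  "dl p v = (if v < p then v else v - 1)"

definition build :: "nat \<Rightarrow> nat \<Rightarrow> (nat \<Rightarrow> nat) \<Rightarrow> nat \<Rightarrow> nat" where
  "build n p \<tau> = (\<lambda>b. if b = 0 then p else if b \<le> n then ins p (\<tau> (b - 1)) else b)"

definition unb :: "nat \<Rightarrow> (nat \<Rightarrow> nat) \<Rightarrow> nat \<Rightarrow> nat" where
  "unb n \<sigma> = (\<lambda>b. if b < n then dl (\<sigma> 0) (\<sigma> (Suc b)) else b)"

lemma ins_neq: "ins p v \<noteq> p" by (auto simp: ins_def)
lemma ins_inj: "ins p v = ins p v' \<longleftrightarrow> v = v'" by (auto simp: ins_def)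
lemma ins_less: "ins p v < ins p v' \<longleftrightarrow> v < v'" by (auto simp: ins_def)
lemma ins_less_p: "ins p v < p \<longleftrightarrow> v < p" by (auto simp: ins_def)
lemma ins_dl: "v \<noteq> p \<Longrightarrow> ins p (dl p v) = v" by (auto simp: ins_def dl_def)

lemma build_perm:
  assumes p: "p \<le> n" and t: "\<tau> permutes {..<n}"
  shows "build n p \<tau> permutes {..<Suc n}"
proof (rule inj_imp_permutes)
  have tin: "\<tau> b < n" if "b < n" for b using permutes_in_image[OF t] that by auto
  show "inj_on (build n p \<tau>) {..<Suc n}"
  proof (rule inj_onI)
    fix x y assume x: "x \<in> {..<Suc n}" and y: "y \<in> {..<Suc n}" and e: "build n p \<tau> x = build n p \<tau> y"
    show "x = y"
    proof (cases "x = 0"; cases "y = 0")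
      assume "x \<noteq> 0" "y \<noteq> 0"
      then have "\<tau> (x - 1) = \<tau> (y - 1)" using e x y by (auto simp: build_def ins_inj)
      then have "x - 1 = y - 1" using permutes_inj[OF t] by (auto dest: injD)
      then show ?thesis using \<open>x \<noteq> 0\<close> \<open>y \<noteq> 0\<close> by simp
    qed (use e x y in \<open>auto simp: build_def ins_neq dest: sym\<close>)
  qed
  show "finite {..<Suc n}" by simp
  show "build n p \<tau> x \<in> {..<Suc n}" if "x \<in> {..<Suc n}" for x
    using that p tin[of "x - 1"] by (auto simp: build_def ins_def)
  show "build n p \<tau> x = x" if "x \<notin> {..<Suc n}" for x
    using that by (auto simp: build_def)
qed

lemma unb_perm:
  assumes s: "\<sigma> permutes {..<Suc n}"
  shows "unb n \<sigma> permutes {..<n}" and "build n (\<sigma> 0) (unb n \<sigma>) = \<sigma>" and "\<sigma> 0 \<le> n"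
proof -
  have sin: "\<sigma> b < Suc n" if "b < Suc n" for b using permutes_in_image[OF s] that by auto
  have sinj: "\<sigma> x = \<sigma> y \<longleftrightarrow> x = y" for x y using permutes_inj[OF s] by (auto dest: injD)
  have sout: "\<sigma> b = b" if "b \<ge> Suc n" for b using permutes_not_in[OF s] that by auto
  show "\<sigma> 0 \<le> n" using sin[of 0] by simp
  show "unb n \<sigma> permutes {..<n}"
  proof (rule inj_imp_permutes)
    show "inj_on (unb n \<sigma>) {..<n}"
    proof (rule inj_onI)
      fix x y assume x: "x \<in> {..<n}" and y: "y \<in> {..<n}" and e: "unb n \<sigma> x = unb n \<sigma> y"
      have "\<sigma> (Suc x) \<noteq> \<sigma> 0" "\<sigma> (Suc y) \<noteq> \<sigma> 0" using sinj by auto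
      then have "ins (\<sigma> 0) (dl (\<sigma> 0) (\<sigma> (Suc x))) = ins (\<sigma> 0) (dl (\<sigma> 0) (\<sigma> (Suc y)))"
        using e x y by (simp add: unb_def)
      then have "\<sigma> (Suc x) = \<sigma> (Suc y)" using \<open>\<sigma> (Suc x) \<noteq> \<sigma> 0\<close> \<open>\<sigma> (Suc y) \<noteq> \<sigma> 0\<close> by (simp add: ins_dl)
      then show "x = y" using sinj by simp
    qed
    show "finite {..<n}" by simp
    show "unb n \<sigma> x \<in> {..<n}" if "x \<in> {..<n}" for x
    proof -
      have "\<sigma> (Suc x) \<noteq> \<sigma> 0" using sinj by auto
      moreover have "\<sigma> (Suc x) < Suc n" "\<sigma> 0 < Suc n" using sin that by auto
      ultimately show ?thesis using that by (auto simp: unb_def dl_def)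
    qed
    show "unb n \<sigma> x = x" if "x \<notin> {..<n}" for x using that by (auto simp: unb_def)
  qed
  show "build n (\<sigma> 0) (unb n \<sigma>) = \<sigma>"
  proof
    fix b
    show "build n (\<sigma> 0) (unb n \<sigma>) b = \<sigma> b"
    proof (cases "b = 0")
      case False
      show ?thesis
      proof (cases "b \<le> n")
        case True
        have "\<sigma> b \<noteq> \<sigma> 0" using sinj False by auto
        then show ?thesis using True False by (auto simp: build_def unb_def ins_dl)
      qed (use False sout in \<open>auto simp: build_def\<close>)
    qed (simp add: build_def)
  qed
qed

lemma build_inj:
  assumes "\<tau> permutes {..<n}" "\<tau>' permutes {..<n}" "build n p \<tau> = build n p' \<tau>'"
  shows "p = p' \<and> \<tau> = \<tau>'"
proof -
  have pp: "p = p'" using fun_cong[OF assms(3), of 0] by (simp add: build_def)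
  have "\<tau> b = \<tau>' b" for b
  proof (cases "b < n")
    case True
    then show ?thesis using fun_cong[OF assms(3), of "Suc b"] pp by (simp add: build_def ins_inj)
  next
    case False
    then show ?thesis using permutes_not_in[OF assms(1)] permutes_not_in[OF assms(2)] by auto
  qed
  then show ?thesis using pp by auto
qed

lemma perm_decomp:
  "{\<sigma>. \<sigma> permutes {..<Suc n}} = (\<lambda>(p, \<tau>). build n p \<tau>) ` ({..n} \<times> {\<tau>. \<tau> permutes {..<n}})"
proof
  show "{\<sigma>. \<sigma> permutes {..<Suc n}} \<subseteq> (\<lambda>(p, \<tau>). build n p \<tau>) ` ({..n} \<times> {\<tau>. \<tau> permutes {..<n}})"
  proof
    fix \<sigma> assume "\<sigma> \<in> {\<sigma>. \<sigma> permutes {..<Suc n}}"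
    then have s: "\<sigma> permutes {..<Suc n}" by simp
    show "\<sigma> \<in> (\<lambda>(p, \<tau>). build n p \<tau>) ` ({..n} \<times> {\<tau>. \<tau> permutes {..<n}})"
      using unb_perm[OF s] by (auto intro!: image_eqI[of _ _ "(\<sigma> 0, unb n \<sigma>)"])
  qed
  show "(\<lambda>(p, \<tau>). build n p \<tau>) ` ({..n} \<times> {\<tau>. \<tau> permutes {..<n}}) \<subseteq> {\<sigma>. \<sigma> permutes {..<Suc n}}"
    using build_perm by auto
qed

lemma sum_perm_decomp:
  "(\<Sum>\<sigma>\<in>{\<sigma>. \<sigma> permutes {..<Suc n}}. F \<sigma>) = (\<Sum>p\<le>n. \<Sum>\<tau>\<in>{\<tau>. \<tau> permutes {..<n}}. F (build n p \<tau>))"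
proof -
  have inj: "inj_on (\<lambda>(p, \<tau>). build n p \<tau>) ({..n} \<times> {\<tau>. \<tau> permutes {..<n}})"
    by (rule inj_onI) (auto dest: build_inj)
  show ?thesis
    unfolding perm_decomp sum.reindex[OF inj] sum.cartesian_product
    by (simp add: case_prod_beta)
qed

definition delw :: "nat \<Rightarrow> nat list \<Rightarrow> nat list" where
  "delw p w = take p w @ drop (Suc p) w"

definition Wc :: "nat list \<Rightarrow> (nat \<Rightarrow> nat) \<Rightarrow> nat list \<Rightarrow> bool" where
  "Wc u \<sigma> w \<longleftrightarrow> length w = length u \<and> (\<forall>b<length u. w ! (\<sigma> b) = u ! b)"

definition Winv :: "nat \<Rightarrow> (nat \<Rightarrow> nat) \<Rightarrow> (nat \<times> nat) set" where
  "Winv n \<sigma> = {(a, b). a < b \<and> b < n \<and> \<sigma> b < \<sigma> a}"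

definition Tt :: "(nat \<Rightarrow> 'g) \<Rightarrow> (nat \<Rightarrow> 'g \<Rightarrow> 'k::field) \<Rightarrow> nat list \<Rightarrow> (nat \<Rightarrow> nat) \<Rightarrow> nat list \<Rightarrow> 'k" where
  "Tt g \<chi> u \<sigma> w = (if Wc u \<sigma> w then (\<Prod>(a, b)\<in>Winv (length u) \<sigma>. \<chi> (u ! b) (g (u ! a))) else 0)"

lemma length_delw: "p < length w \<Longrightarrow> length (delw p w) = length w - 1"
  by (simp add: delw_def)

lemma delw_nth: "p < length w \<Longrightarrow> v < length w - 1 \<Longrightarrow> delw p w ! v = w ! (ins p v)"
  by (auto simp: delw_def ins_def nth_append min_def)

lemma Wc_build:
  assumes n: "length u = n" and p: "p \<le> n" and t: "\<tau> permutes {..<n}"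
  shows "Wc (x # u) (build n p \<tau>) w \<longleftrightarrow> (p < length w \<and> w ! p = x \<and> Wc u \<tau> (delw p w))"
proof -
  have tin: "\<tau> b < n" if "b < n" for b using permutes_in_image[OF t] that by auto
  show ?thesis
  proof
    assume W: "Wc (x # u) (build n p \<tau>) w"
    then have lw: "length w = Suc n" using n by (simp add: Wc_def)
    have "w ! p = x" using W n spec[of _ 0] by (auto simp: Wc_def build_def)
    moreover have "w ! (ins p (\<tau> b)) = u ! b" if "b < n" for b
      using W n that spec[of _ "Suc b"] by (auto simp: Wc_def build_def)
    ultimately show "p < length w \<and> w ! p = x \<and> Wc u \<tau> (delw p w)"
      using lw p n tin by (auto simp: Wc_def length_delw delw_nth)
  next
    assume H: "p < length w \<and> w ! p = x \<and> Wc u \<tau> (delw p w)"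
    then have lw: "length w = Suc n" using n by (auto simp: Wc_def length_delw)
    have "w ! (ins p (\<tau> b)) = u ! b" if "b < n" for b
      using H that tin[OF that] lw n by (auto simp: Wc_def delw_nth)
    then show "Wc (x # u) (build n p \<tau>) w"
      using H lw n unfolding Wc_def build_def
      by (auto simp: less_Suc_eq_0_disj)
  qed
qed

lemma Winv_build:
  "Winv (Suc n) (build n p \<tau>) = (\<lambda>b. (0, Suc b)) ` {b. b < n \<and> \<tau> b < p} \<union> (\<lambda>(a, b). (Suc a, Suc b)) ` Winv n \<tau>"
proof (rule set_eqI)
  fix ab :: "nat \<times> nat"
  obtain a b where ab: "ab = (a, b)" by fastforce
  show "ab \<in> Winv (Suc n) (build n p \<tau>) \<longleftrightarrow> ab \<in> (\<lambda>b. (0, Suc b)) ` {b. b < n \<and> \<tau> b < p} \<union> (\<lambda>(a, b). (Suc a, Suc b)) ` Winv n \<tau>"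
    unfolding ab Winv_def
    by (cases a; cases b) (auto simp: build_def ins_less ins_less_p)
qed

lemma T_build:
  assumes n: "length u = n" and p: "p \<le> n" and t: "\<tau> permutes {..<n}"
  shows "Tt g \<chi> (x # u) (build n p \<tau>) w =
    (if p < length w \<and> w ! p = x then (\<Prod>k<p. \<chi> (w ! k) (g x)) * Tt g \<chi> u \<tau> (delw p w) else 0)"
proof (cases "p < length w \<and> w ! p = x \<and> Wc u \<tau> (delw p w)")
  case False
  then show ?thesis using Wc_build[OF n p t] by (auto simp: Tt_def)
next
  case True
  have tin: "\<tau> b < n" if "b < n" for b using permutes_in_image[OF t] that by auto
  have lw: "length w = Suc n" using True n by (auto simp: Wc_def length_delw)
  let ?F = "\<lambda>(a, b). \<chi> ((x # u) ! b) (g ((x # u) ! a))"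
  have fin: "finite (Winv m \<sigma>)" for m \<sigma>
    by (rule finite_subset[of _ "{..<m} \<times> {..<m}"]) (auto simp: Winv_def)
  have fin1: "finite {b. b < n \<and> \<tau> b < p}" by auto
  have "(\<Prod>ab\<in>Winv (Suc n) (build n p \<tau>). ?F ab) =
     (\<Prod>ab\<in>(\<lambda>b. (0, Suc b)) ` {b. b < n \<and> \<tau> b < p}. ?F ab) * (\<Prod>ab\<in>(\<lambda>(a, b). (Suc a, Suc b)) ` Winv n \<tau>. ?F ab)"
    unfolding Winv_build by (rule prod.union_disjoint) (use fin fin1 in auto)
  also have "(\<Prod>ab\<in>(\<lambda>b. (0, Suc b)) ` {b. b < n \<and> \<tau> b < p}. ?F ab) = (\<Prod>b\<in>{b. b < n \<and> \<tau> b < p}. \<chi> (u ! b) (g x))"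
    by (subst prod.reindex) (auto simp: inj_on_def)
  also have "\<dots> = (\<Prod>b\<in>{b. b < n \<and> \<tau> b < p}. \<chi> (w ! (\<tau> b)) (g x))"
  proof (rule prod.cong)
    fix b assume b: "b \<in> {b. b < n \<and> \<tau> b < p}"
    have "u ! b = delw p w ! (\<tau> b)" using True b n by (auto simp: Wc_def)
    also have "\<dots> = w ! (\<tau> b)" using b lw tin[of b] True by (auto simp: delw_nth ins_def)
    finally show "\<chi> (u ! b) (g x) = \<chi> (w ! (\<tau> b)) (g x)" by simp
  qed simp
  also have "\<dots> = (\<Prod>k<p. \<chi> (w ! k) (g x))"
  proof (rule prod.reindex_bij_betw)
    show "bij_betw \<tau> {b. b < n \<and> \<tau> b < p} {..<p}"
    proof (rule bij_betw_imageI)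
      show "inj_on \<tau> {b. b < n \<and> \<tau> b < p}" using permutes_inj_on[OF t] .
      show "\<tau> ` {b. b < n \<and> \<tau> b < p} = {..<p}"
      proof
        show "{..<p} \<subseteq> \<tau> ` {b. b < n \<and> \<tau> b < p}"
        proof
          fix k assume k: "k \<in> {..<p}"
          have "inv \<tau> k < n"
            using permutes_in_image[OF permutes_inv[OF t], of k] k p by auto
          moreover have "\<tau> (inv \<tau> k) = k" by (rule permutes_inverses(1)[OF t])
          ultimately show "k \<in> \<tau> ` {b. b < n \<and> \<tau> b < p}" using k by (auto intro!: image_eqI[of _ _ "inv \<tau> k"])
        qed
      qed auto
    qed
  qed
  also have "(\<Prod>ab\<in>(\<lambda>(a, b). (Suc a, Suc b)) ` Winv n \<tau>. ?F ab) = (\<Prod>(a, b)\<in>Winv n \<tau>. \<chi> (u ! b) (g (u ! a)))"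
    by (subst prod.reindex) (auto simp: inj_on_def case_prod_beta)
  finally show ?thesis using True Wc_build[OF n p t] n by (simp add: Tt_def)
qed

fun Qf :: "(nat \<Rightarrow> 'g) \<Rightarrow> (nat \<Rightarrow> 'g \<Rightarrow> 'k::field) \<Rightarrow> nat list \<Rightarrow> nat list \<Rightarrow> 'k" where
  "Qf g \<chi> [] w = (if w = [] then 1 else 0)"
| "Qf g \<chi> (x # u) w = (\<Sum>p\<le>length u. if p < length w \<and> w ! p = x then (\<Prod>k<p. \<chi> (w ! k) (g x)) * Qf g \<chi> u (delw p w) else 0)"

lemma sumT_Q: "(\<Sum>\<sigma>\<in>{\<sigma>. \<sigma> permutes {..<length u}}. Tt g \<chi> u \<sigma> w) = Qf g \<chi> u w"
proof (induction u arbitrary: w)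
  case Nil
  have "{\<sigma>. \<sigma> permutes {..<0::nat}} = {id}" by (simp add: lessThan_0 permutes_empty)
  then show ?case by (simp add: Tt_def Wc_def Winv_def)
next
  case (Cons x u)
  have "(\<Sum>\<sigma>\<in>{\<sigma>. \<sigma> permutes {..<length (x # u)}}. Tt g \<chi> (x # u) \<sigma> w)
     = (\<Sum>p\<le>length u. \<Sum>\<tau>\<in>{\<tau>. \<tau> permutes {..<length u}}. Tt g \<chi> (x # u) (build (length u) p \<tau>) w)"
    using sum_perm_decomp[where n="length u" and F="\<lambda>\<sigma>. Tt g \<chi> (x # u) \<sigma> w"] by (simp only: length_Cons)
  also have "\<dots> = (\<Sum>p\<le>length u. \<Sum>\<tau>\<in>{\<tau>. \<tau> permutes {..<length u}}.
      (if p < length w \<and> w ! p = x then (\<Prod>k<p. \<chi> (w ! k) (g x)) * Tt g \<chi> u \<tau> (delw p w) else 0))"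
    by (intro sum.cong refl) (simp add: T_build)
  also have "\<dots> = Qf g \<chi> (x # u) w"
    unfolding Qf.simps
  proof (rule sum.cong[OF refl])
    fix p
    show "(\<Sum>\<tau>\<in>{\<tau>. \<tau> permutes {..<length u}}.
      (if p < length w \<and> w ! p = x then (\<Prod>k<p. \<chi> (w ! k) (g x)) * Tt g \<chi> u \<tau> (delw p w) else 0))
      = (if p < length w \<and> w ! p = x then (\<Prod>k<p. \<chi> (w ! k) (g x)) * Qf g \<chi> u (delw p w) else 0)"
    proof (cases "p < length w \<and> w ! p = x")
      case True
      then show ?thesis by (simp add: Cons.IH[symmetric] sum_distrib_left)
    next
      case False
      then show ?thesis by (simp only: if_False sum.neutral_const)
    qed
  qed
  finally show ?case .
qed

lemma map_inv_Wc:
  assumes s: "\<sigma> permutes {..<length u}"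
  shows "(map (\<lambda>p. u ! (inv \<sigma> p)) [0..<length u] = w) \<longleftrightarrow> Wc u \<sigma> w"
proof -
  have "(map (\<lambda>p. u ! (inv \<sigma> p)) [0..<length u] = w) \<longleftrightarrow> length w = length u \<and> (\<forall>i<length u. w ! i = u ! (inv \<sigma> i))"
  proof
    assume "map (\<lambda>p. u ! (inv \<sigma> p)) [0..<length u] = w"
    then show "length w = length u \<and> (\<forall>i<length u. w ! i = u ! (inv \<sigma> i))" by auto
  next
    assume H: "length w = length u \<and> (\<forall>i<length u. w ! i = u ! (inv \<sigma> i))"
    show "map (\<lambda>p. u ! (inv \<sigma> p)) [0..<length u] = w"
      by (rule nth_equalityI) (use H in auto)
  qed
  also have "(\<forall>i<length u. w ! i = u ! (inv \<sigma> i)) \<longleftrightarrow> (\<forall>b<length u. w ! (\<sigma> b) = u ! b)"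
  proof
    assume H: "\<forall>i<length u. w ! i = u ! (inv \<sigma> i)"
    show "\<forall>b<length u. w ! (\<sigma> b) = u ! b"
    proof (intro allI impI)
      fix b assume b: "b < length u"
      have "\<sigma> b < length u" using permutes_in_image[OF s] b by auto
      then have "w ! (\<sigma> b) = u ! (inv \<sigma> (\<sigma> b))" using H by blast
      then show "w ! (\<sigma> b) = u ! b" by (simp only: permutes_inverses(2)[OF s])
    qed
  next
    assume H: "\<forall>b<length u. w ! (\<sigma> b) = u ! b"
    show "\<forall>i<length u. w ! i = u ! (inv \<sigma> i)"
    proof (intro allI impI)
      fix i assume i: "i < length u"
      have "inv \<sigma> i < length u" using permutes_in_image[OF permutes_inv[OF s]] i by auto
      then have "w ! (\<sigma> (inv \<sigma> i)) = u ! (inv \<sigma> i)" using H by blast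
      then show "w ! i = u ! (inv \<sigma> i)" by (simp only: permutes_inverses(1)[OF s])
    qed
  qed
  finally show ?thesis by (simp add: Wc_def)
qed

lemma qsym_word_Q: "qsym_word g \<chi> u w = Qf g \<chi> u w"
proof -
  have "qsym_word g \<chi> u w = (\<Sum>\<sigma>\<in>{\<sigma>. \<sigma> permutes {..<length u}}. Tt g \<chi> u \<sigma> w)"
    unfolding qsym_word_def
  proof (rule sum.cong[OF refl])
    fix \<sigma> assume "\<sigma> \<in> {\<sigma>. \<sigma> permutes {..<length u}}"
    then have s: "\<sigma> permutes {..<length u}" by simp
    show "(if map (\<lambda>p. u ! (inv \<sigma> p)) [0..<length u] = w
      then \<Prod>(a, b)\<in>{(a, b). a < b \<and> b < length u \<and> \<sigma> b < \<sigma> a}. \<chi> (u ! b) (g (u ! a)) else 0) = Tt g \<chi> u \<sigma> w"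
      unfolding map_inv_Wc[OF s] Tt_def Winv_def ..
  qed
  then show ?thesis using sumT_Q by simp
qed


lemma mset_delw: "p < length w \<Longrightarrow> mset w = add_mset (w ! p) (mset (delw p w))"
proof -
  assume p: "p < length w"
  have "mset w = mset (take p w @ w ! p # drop (Suc p) w)" using id_take_nth_drop[OF p] by metis
  then show ?thesis by (simp add: delw_def)
qed

lemma Qf_zero: "mset u \<noteq> mset w \<Longrightarrow> Qf g \<chi> u w = 0"
proof (induction u arbitrary: w)
  case Nil
  then show ?case by auto
next
  case (Cons x u)
  show ?case unfolding Qf.simps
  proof (rule sum.neutral, rule ballI)
    fix p assume "p \<in> {..length u}"
    show "(if p < length w \<and> w ! p = x then (\<Prod>k<p. \<chi> (w ! k) (g x)) * Qf g \<chi> u (delw p w) else 0) = 0"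
    proof (cases "p < length w \<and> w ! p = x")
      case True
      then have "mset w = add_mset x (mset (delw p w))" using mset_delw by metis
      then have "mset u \<noteq> mset (delw p w)" using Cons.prems by auto
      then show ?thesis using Cons.IH by simp
    next
      case False
      then show ?thesis by (simp only: if_False)
    qed
  qed
qed

definition qint :: "'k::field \<Rightarrow> nat \<Rightarrow> 'k" where
  "qint c n = (\<Sum>j<n. c ^ j)"

definition qfact :: "'k::field \<Rightarrow> nat \<Rightarrow> 'k" where
  "qfact c n = (\<Prod>m\<in>{1..n}. qint c m)"

definition Gf :: "(nat \<Rightarrow> 'g) \<Rightarrow> (nat \<Rightarrow> 'g \<Rightarrow> 'k::field) \<Rightarrow> nat \<Rightarrow> nat multiset \<Rightarrow> 'k" where
  "Gf g \<chi> \<theta> M = (\<Prod>y<\<theta>. qfact (\<chi> y (g y)) (count M y))"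

lemma qint_Suc: "qint c (Suc n) = 1 + c * qint c n"
  unfolding qint_def by (simp add: sum.lessThan_Suc_shift sum_distrib_left del: sum.lessThan_Suc)

lemma qfact_Suc: "qfact c (Suc n) = qint c (Suc n) * qfact c n"
  unfolding qfact_def by (simp add: prod.cl_ivl_Suc)

lemma Gf_add: "x < \<theta> \<Longrightarrow> Gf g \<chi> \<theta> (add_mset x M) = qint (\<chi> x (g x)) (Suc (count M x)) * Gf g \<chi> \<theta> M"
proof -
  assume x: "x < \<theta>"
  have "Gf g \<chi> \<theta> (add_mset x M) = qfact (\<chi> x (g x)) (Suc (count M x)) * (\<Prod>y\<in>{..<\<theta>} - {x}. qfact (\<chi> y (g y)) (count (add_mset x M) y))"
    unfolding Gf_def using x by (subst prod.remove[of _ x]) auto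
  also have "(\<Prod>y\<in>{..<\<theta>} - {x}. qfact (\<chi> y (g y)) (count (add_mset x M) y)) = (\<Prod>y\<in>{..<\<theta>} - {x}. qfact (\<chi> y (g y)) (count M y))"
    by (rule prod.cong) auto
  also have "Gf g \<chi> \<theta> M = qfact (\<chi> x (g x)) (count M x) * (\<Prod>y\<in>{..<\<theta>} - {x}. qfact (\<chi> y (g y)) (count M y))"
    unfolding Gf_def using x by (subst prod.remove[of _ x]) auto
  ultimately show ?thesis by (simp add: qfact_Suc)
qed

lemma SL:
  "sorted_wrt (\<lambda>a b. b \<le> a) w \<Longrightarrow>
   (\<Sum>p<length w. if w ! p = x then (\<Prod>k<p. \<chi> (w ! k) (g x)) else 0)
     = Am g \<chi> x (mset w) * qint (\<chi> x (g x)) (count (mset w) x)"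
proof (induction w)
  case Nil
  then show ?case by (simp add: qint_def)
next
  case (Cons y w)
  have le: "\<forall>z\<in>set w. z \<le> y" and sw: "sorted_wrt (\<lambda>a b. b \<le> a) w" using Cons.prems by auto
  have PS: "(\<Prod>k<Suc i. \<chi> ((y # w) ! k) (g x)) = \<chi> y (g x) * (\<Prod>k<i. \<chi> (w ! k) (g x))" for i
    by (simp only: prod.lessThan_Suc_shift nth_Cons_0 nth_Cons_Suc)
  have "(\<Sum>p<length (y # w). if (y # w) ! p = x then (\<Prod>k<p. \<chi> ((y # w) ! k) (g x)) else 0)
    = (if y = x then 1 else 0) + (\<Sum>p<length w. if w ! p = x then \<chi> y (g x) * (\<Prod>k<p. \<chi> (w ! k) (g x)) else 0)"
    by (simp only: length_Cons sum.lessThan_Suc_shift nth_Cons_0 nth_Cons_Suc PS lessThan_0 prod.empty)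
  also have "(\<Sum>p<length w. if w ! p = x then \<chi> y (g x) * (\<Prod>k<p. \<chi> (w ! k) (g x)) else 0)
     = \<chi> y (g x) * (\<Sum>p<length w. if w ! p = x then (\<Prod>k<p. \<chi> (w ! k) (g x)) else 0)"
    by (simp add: sum_distrib_left if_distrib cong: if_cong)
  also have "\<dots> = \<chi> y (g x) * (Am g \<chi> x (mset w) * qint (\<chi> x (g x)) (count (mset w) x))"
    using Cons.IH sw by simp
  finally have L: "(\<Sum>p<length (y # w). if (y # w) ! p = x then (\<Prod>k<p. \<chi> ((y # w) ! k) (g x)) else 0)
     = (if y = x then 1 else 0) + \<chi> y (g x) * (Am g \<chi> x (mset w) * qint (\<chi> x (g x)) (count (mset w) x))" .
  consider "y = x" | "x < y" | "y < x" by linarith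
  then show ?case
  proof cases
    case 1
    have "filter (\<lambda>z. x < z) w = []" using le 1 by (auto simp: filter_empty_conv)
    then have F: "filter_mset ((<) x) (mset w) = {#}" by (metis mset_filter mset.simps(1))
    have "Am g \<chi> x (mset w) = 1" unfolding Am_def F by simp
    then show ?thesis unfolding L using 1 by (simp add: Am_def qint_Suc)
  next
    case 2
    then show ?thesis unfolding L by (simp add: Am_def qq_def)
  next
    case 3
    have C0: "count (mset w) x = 0" using le 3 by (auto simp: count_eq_zero_iff)
    have C1: "count (mset (y # w)) x = 0" using C0 3 by simp
    show ?thesis unfolding L C0 C1 using 3 by (simp add: qint_def)
  qed
qed

lemma sorted_delw: "sorted_wrt P w \<Longrightarrow> sorted_wrt P (delw p w)"
proof -
  assume s: "sorted_wrt P w"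
  have "sorted_wrt P (take p w @ drop p w)" using s by simp
  moreover have "sorted_wrt P (drop (Suc p) w)" using s by (rule sorted_wrt_drop)
  ultimately have "sorted_wrt P (take p w @ drop (Suc p) w)"
    unfolding sorted_wrt_append using set_drop_subset_set_drop[of p "Suc p" w]
    by auto
  then show ?thesis by (simp add: delw_def)
qed

lemma Qf_sorted:
  "set u \<subseteq> {..<\<theta>} \<Longrightarrow> sorted_wrt (\<lambda>a b. b \<le> a) w \<Longrightarrow> mset w = mset u \<Longrightarrow>
   Qf g \<chi> u w = Dw g \<chi> u * Gf g \<chi> \<theta> (mset u)"
proof (induction u arbitrary: w)
  case Nil
  then show ?case by (simp add: Gf_def qfact_def)
next
  case (Cons x u)
  have lw: "length w = Suc (length u)" using Cons.prems(3) by (metis length_Cons size_mset)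
  have "Qf g \<chi> (x # u) w = (\<Sum>p<length w. (if w ! p = x then (\<Prod>k<p. \<chi> (w ! k) (g x)) else 0) * (Dw g \<chi> u * Gf g \<chi> \<theta> (mset u)))"
    unfolding Qf.simps
  proof (rule sum.cong)
    show "{..length u} = {..<length w}" using lw by auto
  next
    fix p assume p: "p \<in> {..<length w}"
    show "(if p < length w \<and> w ! p = x then (\<Prod>k<p. \<chi> (w ! k) (g x)) * Qf g \<chi> u (delw p w) else 0)
      = (if w ! p = x then (\<Prod>k<p. \<chi> (w ! k) (g x)) else 0) * (Dw g \<chi> u * Gf g \<chi> \<theta> (mset u))"
    proof (cases "w ! p = x")
      case True
      have "mset w = add_mset x (mset (delw p w))" using mset_delw[of p w] p True by auto
      then have "mset (delw p w) = mset u" using Cons.prems(3) by simp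
      then have "Qf g \<chi> u (delw p w) = Dw g \<chi> u * Gf g \<chi> \<theta> (mset u)"
        using Cons.IH[of "delw p w"] Cons.prems sorted_delw by auto
      then show ?thesis using True p by simp
    qed (use p in simp)
  qed
  also have "\<dots> = Am g \<chi> x (mset w) * qint (\<chi> x (g x)) (count (mset w) x) * (Dw g \<chi> u * Gf g \<chi> \<theta> (mset u))"
    by (simp only: sum_distrib_right[symmetric] SL[OF Cons.prems(2)])
  also have "\<dots> = Dw g \<chi> (x # u) * Gf g \<chi> \<theta> (mset (x # u))"
    using Cons.prems by (simp add: Gf_add Am_def)
  finally show ?case .
qed



lemma qint_nz:
  fixes c :: "'k::field_char_0"
  assumes m0: "0 < m" and m: "m < mord c"
  shows "qint c m \<noteq> 0"
proof -
  have ex: "\<exists>n>0. c ^ n = 1" using m by (auto simp: mord_def split: if_splits)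
  then have md: "mord c = (LEAST n. n > 0 \<and> c ^ n = 1)" by (simp add: mord_def)
  have cm: "c ^ m \<noteq> 1"
  proof
    assume "c ^ m = 1"
    then have "(LEAST n. n > 0 \<and> c ^ n = 1) \<le> m" using m0 by (intro Least_le) auto
    then show False using m md by simp
  qed
  show ?thesis
  proof (cases "c = 1")
    case True
    then show ?thesis using m0 by (simp add: qint_def)
  next
    case False
    then have "qint c m = (c ^ m - 1) / (c - 1)" by (simp add: qint_def geometric_sum)
    then show ?thesis using cm False by simp
  qed
qed

lemma qfact_nz:
  fixes c :: "'k::field_char_0"
  assumes "n < mord c"
  shows "qfact c n \<noteq> 0"
proof -
  have "\<forall>a\<in>{1..n}. qint c a \<noteq> 0"
  proof
    fix a assume "a \<in> {1..n}"
    then show "qint c a \<noteq> 0" using assms by (intro qint_nz) auto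
  qed
  then show ?thesis unfolding qfact_def by (simp add: prod_zero_iff)
qed

lemma Gf_zero:
  fixes \<chi> :: "nat \<Rightarrow> 'g \<Rightarrow> 'k::field_char_0"
  assumes "Gf g \<chi> \<theta> M = 0"
  shows "\<exists>y<\<theta>. mord (\<chi> y (g y)) \<le> count M y"
proof (rule ccontr)
  assume "\<not> ?thesis"
  then have "qfact (\<chi> y (g y)) (count M y) \<noteq> 0" if "y < \<theta>" for y
    using that qfact_nz by (meson not_le)
  then show False using assms by (auto simp: Gf_def prod_zero_iff)
qed

context chars_nz
begin

lemma mon_power_ideal:
  assumes S: "sord_rels \<theta> g \<chi> \<subseteq> S" and i: "i < \<theta>" and cnt: "mord (\<chi> i (g i)) \<le> count M i"
    and M: "set_mset M \<subseteq> {..<\<theta>}"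
  shows "mon (sorted_list_of_multiset M) \<in> ideal_gen \<theta> S"
proof -
  define N where "N = mord (\<chi> i (g i))"
  define r where "r = sorted_list_of_multiset (M - replicate_mset N i)"
  define u where "u = replicate N i @ r"
  have S': "Sord_rels \<theta> g \<chi> \<subseteq> S" using S unfolding sord_rels_def by auto
  have sub: "replicate_mset N i \<subseteq># M" using cnt unfolding N_def by (simp add: subseteq_mset_def)
  have mu: "mset u = M" unfolding u_def r_def using sub by (simp add: mset_replicate subset_mset.add_diff_inverse)
  have rL: "r \<in> lists {..<\<theta>}" unfolding r_def using M by (auto, metis in_diffD lessThan_iff subsetD)
  have uL: "u \<in> lists {..<\<theta>}" using mu M by (auto simp flip: set_mset_mset)
  have "mon (replicate N i) \<in> sord_rels \<theta> g \<chi>" unfolding sord_rels_def N_def using i by blast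
  then have "mon (replicate N i) \<cdot>\<^sub>T mon r \<in> ideal_gen \<theta> S"
    using S rL by (intro ideal_gen.rmult ideal_gen.gen) auto
  then have U: "mon u \<in> ideal_gen \<theta> S" unfolding u_def mon_mult_mon .
  define v where "v = sorted_list_of_multiset M"
  have sv: "sort u = v" unfolding v_def using mu by (metis sorted_list_of_multiset_mset)
  have vL: "v \<in> lists {..<\<theta>}" unfolding v_def using M by auto
  define c where "c = Dw g \<chi> u / Dw g \<chi> v"
  have c0: "c \<noteq> 0" unfolding c_def using Dw_nz[OF uL] Dw_nz[OF vL] by simp
  have E: "ncsub (mon u) (ncscale c (mon v)) \<in> ideal_gen \<theta> S"
    using Eqv_sort[OF S' uL] unfolding Eqv_def sv c_def .
  have "ncsub (mon u) (ncsub (mon u) (ncscale c (mon v))) \<in> ideal_gen \<theta> S"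
    using U E by (rule ideal_sub)
  then have "ncscale (1 / c) (ncsub (mon u) (ncsub (mon u) (ncscale c (mon v)))) \<in> ideal_gen \<theta> S"
    by (rule ideal_gen.scale)
  moreover have "ncscale (1 / c) (ncsub (mon u) (ncsub (mon u) (ncscale c (mon v)))) = mon v"
    using c0 by (auto simp: ncscale_def ncsub_def)
  ultimately show ?thesis unfolding v_def by simp
qed

end

locale chars_nz0 = chars_nz \<theta> g \<chi> for \<theta> :: nat and g :: "nat \<Rightarrow> 'g" and \<chi> :: "nat \<Rightarrow> 'g \<Rightarrow> 'k::field_char_0"
begin

lemma part2:
  assumes S: "sord_rels \<theta> g \<chi> \<subseteq> S" and f: "f \<in> nichols_ideal \<theta> g \<chi>"
  shows "f \<in> ideal_gen \<theta> S"
proof -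
  have S': "Sord_rels \<theta> g \<chi> \<subseteq> S" using S unfolding sord_rels_def by auto
  have TV: "finite {w. f w \<noteq> 0}" "{w. f w \<noteq> 0} \<subseteq> lists {..<\<theta>}" and Q0: "qsym g \<chi> f = (\<lambda>w. 0)"
    using f unfolding nichols_ideal_def TV_def by auto
  define supp where "supp = {w. f w \<noteq> 0}"
  define Ms where "Ms = mset ` supp"
  define fM where "fM M = (\<lambda>w. if mset w = M then f w else 0)" for M
  have fMJ: "fM M \<in> ideal_gen \<theta> S" if M: "M \<in> Ms" for M
  proof (rule criterion[OF S'])
    obtain u0 where u0: "u0 \<in> supp" "M = mset u0" using M unfolding Ms_def by auto
    show MS: "set_mset M \<subseteq> {..<\<theta>}" using u0 TV(2) unfolding supp_def by auto
    show "\<And>w. fM M w \<noteq> 0 \<Longrightarrow> mset w = M" unfolding fM_def by (auto split: if_splits)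
    define w1 where "w1 = rev (sorted_list_of_multiset M)"
    have w1s: "sorted_wrt (\<lambda>a b. b \<le> a) w1" unfolding w1_def by (simp add: sorted_wrt_rev)
    have w1m: "mset w1 = M" unfolding w1_def by simp
    have "0 = qsym g \<chi> f w1" using Q0 by (simp add: fun_eq_iff)
    also have "\<dots> = (\<Sum>u\<in>supp. f u * Qf g \<chi> u w1)"
      unfolding qsym_def supp_def qsym_word_Q ..
    also have "\<dots> = (\<Sum>u\<in>supp. if mset u = M then Gf g \<chi> \<theta> M * (f u * Dw g \<chi> u) else 0)"
    proof (rule sum.cong[OF refl])
      fix u assume u: "u \<in> supp"
      show "f u * Qf g \<chi> u w1 = (if mset u = M then Gf g \<chi> \<theta> M * (f u * Dw g \<chi> u) else 0)"
      proof (cases "mset u = M")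
        case True
        have "set u \<subseteq> {..<\<theta>}" using u TV(2) unfolding supp_def by auto
        then show ?thesis using Qf_sorted[of u \<theta> w1 g \<chi>] True w1s w1m by simp
      next
        case False
        then have "mset u \<noteq> mset w1" using w1m by simp
        then show ?thesis using False by (simp add: Qf_zero)
      qed
    qed
    also have "\<dots> = Gf g \<chi> \<theta> M * (\<Sum>u\<in>{u \<in> supp. mset u = M}. f u * Dw g \<chi> u)"
      by (simp add: sum.inter_filter[OF TV(1)[folded supp_def]] sum_distrib_left if_distrib cong: if_cong)
    also have "(\<Sum>u\<in>{u \<in> supp. mset u = M}. f u * Dw g \<chi> u) = Lam g \<chi> M (fM M)"
    proof -
      have "Lam g \<chi> M (fM M) = (\<Sum>u\<in>PM M. f u * Dw g \<chi> u)"
        unfolding Lam_def fM_def by (rule sum.cong) (auto simp: PM_def)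
      also have "\<dots> = (\<Sum>u\<in>{u \<in> supp. mset u = M}. f u * Dw g \<chi> u)"
        by (rule sum.mono_neutral_right[OF finite_PM]) (auto simp: PM_def supp_def)
      finally show ?thesis by simp
    qed
    finally have "Gf g \<chi> \<theta> M = 0 \<or> Lam g \<chi> M (fM M) = 0" by simp
    then show "Lam g \<chi> M (fM M) = 0 \<or> mon (sorted_list_of_multiset M) \<in> ideal_gen \<theta> S"
    proof
      assume "Gf g \<chi> \<theta> M = 0"
      then obtain y where "y < \<theta>" "mord (\<chi> y (g y)) \<le> count M y" using Gf_zero by blast
      then show ?thesis using mon_power_ideal[OF S _ _ MS] by blast
    qed simp
  qed
  have fin: "finite Ms" unfolding Ms_def supp_def using TV(1) by simp
  have "(\<lambda>w. \<Sum>M\<in>Ms. fM M w) \<in> ideal_gen \<theta> S" using ideal_sum[OF fin] fMJ by blast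
  moreover have "(\<lambda>w. \<Sum>M\<in>Ms. fM M w) = f"
  proof
    fix w
    have "(\<Sum>M\<in>Ms. fM M w) = (\<Sum>M\<in>Ms. if M = mset w then f w else 0)"
      unfolding fM_def by (rule sum.cong) auto
    also have "\<dots> = f w" using fin by (subst sum.delta) (auto simp: Ms_def supp_def)
    finally show "(\<Sum>M\<in>Ms. fM M w) = f w" .
  qed
  ultimately show ?thesis by simp
qed

end


theorem lemma4p8:
  fixes \<theta> :: nat
    and g :: "nat \<Rightarrow> 'g::{finite, ab_group_add}"
    and \<chi> :: "nat \<Rightarrow> 'g \<Rightarrow> 'k::field_char_0"
    and a :: "nat \<Rightarrow> nat \<Rightarrow> int"
  assumes chars: "\<And>j x y. j < \<theta> \<Longrightarrow> \<chi> j (x + y) = \<chi> j x * \<chi> j y"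
      and chars0: "\<And>j. j < \<theta> \<Longrightarrow> \<chi> j 0 = 1"
      and fct: "finite_cartan_type \<theta> g \<chi> a"
      and odd_ord: "\<And>i. i < \<theta> \<Longrightarrow> odd (mord (\<chi> i (g i)))"
      and G2: "\<And>i. i < \<theta> \<Longrightarrow> in_G2_component \<theta> a i \<Longrightarrow> coprime (mord (\<chi> i (g i))) 3"
      and blocks: "block_diagonal \<theta> a"
      and dynkin: "finite_type_cartan_matrix \<theta> a"
  shows "ideal_gen \<theta> (Rpre_rels \<theta> g \<chi> a) \<subseteq> ideal_gen \<theta> (Sord_rels \<theta> g \<chi>)
         \<and> nichols_ideal \<theta> g \<chi> \<subseteq> ideal_gen \<theta> (sord_rels \<theta> g \<chi>)"
proof -
  have nz: "\<chi> b x \<noteq> 0" if b: "b < \<theta>" for b x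
  proof
    assume "\<chi> b x = 0"
    then have "\<chi> b (x + - x) = 0" using chars[OF b, of x "- x"] by simp
    then show False using chars0[OF b] by simp
  qed
  interpret chars_nz0 \<theta> g \<chi> by unfold_locales (rule nz)
  have ct: "cartan_type \<theta> g \<chi> a" using fct unfolding finite_cartan_type_def by simp
  have P1: "Rpre_rels \<theta> g \<chi> a \<subseteq> ideal_gen \<theta> (Sord_rels \<theta> g \<chi>)"
  proof
    fix r assume "r \<in> Rpre_rels \<theta> g \<chi> a"
    then obtain i j where r: "r = (ad_sk g \<chi> i ^^ nat (1 - a i j)) (X j)" and ij: "i < \<theta>" "j < \<theta>" "i \<noteq> j"
      unfolding Rpre_rels_def by blast
    have "a i j \<le> 0" "\<chi> j (g i) * \<chi> i (g j) = (\<chi> i (g i)) powi (a i j)"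
      using ct ij unfolding cartan_type_def by auto
    then show "r \<in> ideal_gen \<theta> (Sord_rels \<theta> g \<chi>)"
      unfolding r using part1_gen[OF subset_refl ij] by blast
  qed
  have P2: "nichols_ideal \<theta> g \<chi> \<subseteq> ideal_gen \<theta> (sord_rels \<theta> g \<chi>)"
    using part2[OF subset_refl] by blast
  show ?thesis using ideal_mono[OF P1] P2 by blast
qed

end
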